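(* Let $$\Delta t_{\mathrm{CFL}}=\frac{2}{\frac{2\hbar}{m}\left(\frac{1}{(\Delta x)^2}+\frac{1}{(\Delta y)^2}+\frac{1}{(\Delta z)^2}\right)+\frac{\max_{i,j,k}|U_{i,j,k}|}{\hbar}}$$ be the CFL limit of the whole region, and for $1\le i\le n_x$, $1\le j\le n_y$, $1\le k\le n_z$ let $\Delta t^{(i,j,k)}_{\mathrm{CFL,gen}}$ be the generalized CFL limit of the single-cell region ($n_x=n_y=n_z=1$) formed by the primary cell with corners $(i,j,k)$ and $(i+1,j+1,k+1)$, with potential $U_{i+a,j+b,k+c}$ ($a,b,c\in\{0,1\}$) at its local node $(a+1,b+1,c+1)$. Then $$\Delta t_{\mathrm{CFL}}\le\min_{i,j,k}\Delta t^{(i,j,k)}_{\mathrm{CFL,gen}}.$$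
   Context: Fix constants $\hbar>0$, $m>0$, cell sizes $\Delta x,\Delta y,\Delta z>0$ and positive integers $n_x,n_y,n_z$. The region is a box of $n_x\times n_y\times n_z$ primary cells of size $\Delta x\times\Delta y\times\Delta z$ with primary nodes $(i,j,k)$, $1\le i\le n_x+1$, $1\le j\le n_y+1$, $1\le k\le n_z+1$, carrying real potential values $U_{i,j,k}$. For a single-cell region (local nodes $(a+1,b+1,c+1)$, $a,b,c\in\{0,1\}$, ordered by $(a+1)+2b+4c$), let $D_U$ be the $8\times 8$ diagonal matrix of its node potentials, $I_p$ the $p\times p$ identity, $W_1=[-1\ \ 1]$, $\otimes$ the Kronecker product, and define $D_V''=\frac{\Delta x\Delta y\Delta z}{8}I_8$; $D=-[I_2\otimes I_2\otimes W_1^T\ \ I_2\otimes W_1^T\otimes I_2\ \ W_1^T\otimes I_2\otimes I_2]$; $D_S''=\mathrm{diag}(\frac{\Delta y\Delta z}{4}I_4,\frac{\Delta x\Delta z}{4}I_4,\frac{\Delta x\Delta y}{4}I_4)$; $D_l'=\mathrm{diag}(\Delta x I_4,\Delta y I_4,\Delta z I_4)$; $H=\frac{\hbar^2}{2m}D D_S''(D_l')^{-1}D^T+D_V''D_U$. Its generalized CFL limit is $2/\rho\!\left(\frac{1}{\hbar}(D_V'')^{-1/2}H(D_V'')^{-1/2}\right)$, with $\rho$ the spectral radius. *)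

theory Defs
  imports "Jordan_Normal_Form.Spectral_Radius"
begin

definition kron :: "'a :: times mat \<Rightarrow> 'a mat \<Rightarrow> 'a mat" where
  "kron A B = mat (dim_row A * dim_row B) (dim_col A * dim_col B)
     (\<lambda>(i, j). A $$ (i div dim_row B, j div dim_col B) * B $$ (i mod dim_row B, j mod dim_col B))"

definition hcat :: "'a :: zero mat \<Rightarrow> 'a mat \<Rightarrow> 'a mat" where
  "hcat A B = mat (dim_row A) (dim_col A + dim_col B)
     (\<lambda>(i, j). if j < dim_col A then A $$ (i, j) else B $$ (i, j - dim_col A))"

definition W1 :: "real mat" where
  "W1 = mat_of_rows_list 2 [[-1, 1]]"

definition Dmat :: "real mat" where
  "Dmat = - hcat (kron (1\<^sub>m 2) (kron (1\<^sub>m 2) (transpose_mat W1)))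
             (hcat (kron (1\<^sub>m 2) (kron (transpose_mat W1) (1\<^sub>m 2)))
                   (kron (transpose_mat W1) (kron (1\<^sub>m 2) (1\<^sub>m 2))))"

definition DV2 :: "real \<Rightarrow> real \<Rightarrow> real \<Rightarrow> real mat" where
  "DV2 dx dy dz = (dx * dy * dz / 8) \<cdot>\<^sub>m 1\<^sub>m 8"

definition DS2 :: "real \<Rightarrow> real \<Rightarrow> real \<Rightarrow> real mat" where
  "DS2 dx dy dz = diag_block_mat [(dy * dz / 4) \<cdot>\<^sub>m 1\<^sub>m 4, (dx * dz / 4) \<cdot>\<^sub>m 1\<^sub>m 4,
                                   (dx * dy / 4) \<cdot>\<^sub>m 1\<^sub>m 4]"

definition Dl1 :: "real \<Rightarrow> real \<Rightarrow> real \<Rightarrow> real mat" where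
  "Dl1 dx dy dz = diag_block_mat [dx \<cdot>\<^sub>m 1\<^sub>m 4, dy \<cdot>\<^sub>m 1\<^sub>m 4, dz \<cdot>\<^sub>m 1\<^sub>m 4]"

definition Dl1_inv :: "real \<Rightarrow> real \<Rightarrow> real \<Rightarrow> real mat" where
  "Dl1_inv dx dy dz = diag_block_mat [(1 / dx) \<cdot>\<^sub>m 1\<^sub>m 4, (1 / dy) \<cdot>\<^sub>m 1\<^sub>m 4, (1 / dz) \<cdot>\<^sub>m 1\<^sub>m 4]"

text \<open>D_U for a single cell: potentials u of the local nodes, local node (a+1,b+1,c+1)
  at 0-based position a + 2b + 4c.\<close>
definition DU :: "(nat \<Rightarrow> nat \<Rightarrow> nat \<Rightarrow> real) \<Rightarrow> real mat" where
  "DU u = mat_diag 8 (\<lambda>p. u (p mod 2) ((p div 2) mod 2) (p div 4))"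

definition Hcell :: "real \<Rightarrow> real \<Rightarrow> real \<Rightarrow> real \<Rightarrow> real \<Rightarrow>
                     (nat \<Rightarrow> nat \<Rightarrow> nat \<Rightarrow> real) \<Rightarrow> real mat" where
  "Hcell hbar m dx dy dz u =
     (hbar^2 / (2 * m)) \<cdot>\<^sub>m (Dmat * DS2 dx dy dz * Dl1_inv dx dy dz * transpose_mat Dmat)
     + DV2 dx dy dz * DU u"

definition DV2_inv_sqrt :: "real \<Rightarrow> real \<Rightarrow> real \<Rightarrow> real mat" where
  "DV2_inv_sqrt dx dy dz = (1 / sqrt (dx * dy * dz / 8)) \<cdot>\<^sub>m 1\<^sub>m 8"

definition cfl_gen_cell :: "real \<Rightarrow> real \<Rightarrow> real \<Rightarrow> real \<Rightarrow> real \<Rightarrow>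
                     (nat \<Rightarrow> nat \<Rightarrow> nat \<Rightarrow> real) \<Rightarrow> real" where
  "cfl_gen_cell hbar m dx dy dz u =
     2 / spectral_radius (map_mat complex_of_real
        ((1 / hbar) \<cdot>\<^sub>m (DV2_inv_sqrt dx dy dz * Hcell hbar m dx dy dz u * DV2_inv_sqrt dx dy dz)))"

definition cfl_region :: "real \<Rightarrow> real \<Rightarrow> real \<Rightarrow> real \<Rightarrow> real \<Rightarrow> nat \<Rightarrow> nat \<Rightarrow> nat \<Rightarrow>
                     (nat \<Rightarrow> nat \<Rightarrow> nat \<Rightarrow> real) \<Rightarrow> real" where
  "cfl_region hbar m dx dy dz nx ny nz U =
     2 / ((2 * hbar / m) * (1 / dx^2 + 1 / dy^2 + 1 / dz^2)
          + Max {\<bar>U i j k\<bar> | i j k. i \<in> {1..nx+1} \<and> j \<in> {1..ny+1} \<and> k \<in> {1..nz+1}} / hbar)"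

end

theory Submission
  imports Defs
begin

definition Dexp :: "real mat" where
 "Dexp = mat_of_rows_list 12 [
  [1,0,0,0, 1,0,0,0, 1,0,0,0],
  [-1,0,0,0, 0,1,0,0, 0,1,0,0],
  [0,1,0,0, -1,0,0,0, 0,0,1,0],
  [0,-1,0,0, 0,-1,0,0, 0,0,0,1],
  [0,0,1,0, 0,0,1,0, -1,0,0,0],
  [0,0,-1,0, 0,0,0,1, 0,-1,0,0],
  [0,0,0,1, 0,0,-1,0, 0,0,-1,0],
  [0,0,0,-1, 0,0,0,-1, 0,0,0,-1]]"

lemma less8: "(p::nat) < 8 \<longleftrightarrow> p \<in> {0,1,2,3,4,5,6,7}" by (auto simp: eval_nat_numeral less_Suc_eq)
lemma less12: "(p::nat) < 12 \<longleftrightarrow> p \<in> {0,1,2,3,4,5,6,7,8,9,10,11}" by (auto simp: eval_nat_numeral less_Suc_eq)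

lemma Dmat_eq: "Dmat = Dexp"
proof (rule eq_matI)
  show "dim_row Dmat = dim_row Dexp" "dim_col Dmat = dim_col Dexp"
    by (simp_all add: Dmat_def Dexp_def hcat_def kron_def W1_def mat_of_rows_list_def)
  fix i j assume "i < dim_row Dexp" "j < dim_col Dexp"
  hence "i < 8" "j < 12" by (simp_all add: Dexp_def mat_of_rows_list_def)
  thus "Dmat $$ (i,j) = Dexp $$ (i,j)"
    unfolding less8 less12
    by (auto simp: Dmat_def Dexp_def hcat_def kron_def W1_def mat_of_rows_list_def)
qed

definition wS :: "real \<Rightarrow> real \<Rightarrow> real \<Rightarrow> nat \<Rightarrow> real" where
  "wS dx dy dz e = (if e < 4 then dy*dz/4 else if e < 8 then dx*dz/4 else dx*dy/4)"
definition wL :: "real \<Rightarrow> real \<Rightarrow> real \<Rightarrow> nat \<Rightarrow> real" where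
  "wL dx dy dz e = (if e < 4 then 1/dx else if e < 8 then 1/dy else 1/dz)"

lemma DS2_eq: "DS2 dx dy dz = mat_diag 12 (wS dx dy dz)"
proof (rule eq_matI)
  show "dim_row (DS2 dx dy dz) = dim_row (mat_diag 12 (wS dx dy dz))"
       "dim_col (DS2 dx dy dz) = dim_col (mat_diag 12 (wS dx dy dz))"
    by (simp_all add: DS2_def mat_diag_def)
  fix i j assume "i < dim_row (mat_diag 12 (wS dx dy dz))" "j < dim_col (mat_diag 12 (wS dx dy dz))"
  hence "i < 12" "j < 12" by (simp_all add: mat_diag_def)
  thus "DS2 dx dy dz $$ (i,j) = mat_diag 12 (wS dx dy dz) $$ (i,j)"
    unfolding less12
    by (auto simp: DS2_def mat_diag_def wS_def)
qed

lemma Dl1_inv_eq: "Dl1_inv dx dy dz = mat_diag 12 (wL dx dy dz)"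
proof (rule eq_matI)
  show "dim_row (Dl1_inv dx dy dz) = dim_row (mat_diag 12 (wL dx dy dz))"
       "dim_col (Dl1_inv dx dy dz) = dim_col (mat_diag 12 (wL dx dy dz))"
    by (simp_all add: Dl1_inv_def mat_diag_def)
  fix i j assume "i < dim_row (mat_diag 12 (wL dx dy dz))" "j < dim_col (mat_diag 12 (wL dx dy dz))"
  hence "i < 12" "j < 12" by (simp_all add: mat_diag_def)
  thus "Dl1_inv dx dy dz $$ (i,j) = mat_diag 12 (wL dx dy dz) $$ (i,j)"
    unfolding less12
    by (auto simp: Dl1_inv_def mat_diag_def wL_def)
qed

definition wt :: "real \<Rightarrow> real \<Rightarrow> real \<Rightarrow> nat \<Rightarrow> real" where
  "wt a b c e = (if e < 4 then a else if e < 8 then b else c)"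

definition Lexp :: "real \<Rightarrow> real \<Rightarrow> real \<Rightarrow> real mat" where
  "Lexp a b c = mat 8 8 (\<lambda>(p,q).
     if p = q then a + b + c
     else if p div 2 = q div 2 then - a
     else if p mod 2 = q mod 2 \<and> p div 4 = q div 4 then - b
     else if p mod 4 = q mod 4 then - c else 0)"

lemma Dexp_carrier: "Dexp \<in> carrier_mat 8 12"
proof -
  have "dim_row Dexp = 8" "dim_col Dexp = 12" by (simp_all add: Dexp_def mat_of_rows_list_def)
  thus ?thesis by (rule carrier_matI)
qed

lemma sum12: "(\<Sum>e<(12::nat). f e) = f 0 + f 1 + f 2 + f 3 + f 4 + f 5 + f 6 + f 7 + f 8 + f 9 + f 10 + f 11"
  by (simp add: eval_nat_numeral)

lemma Lgen: "i < 8 \<Longrightarrow> j < 8 \<Longrightarrow>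
  (Dexp * mat_diag 12 (wt a b c) * transpose_mat Dexp) $$ (i,j) =
  (\<Sum>e<12. Dexp $$ (i,e) * wt a b c e * Dexp $$ (j,e))"
  using Dexp_carrier
  by (simp add: mat_diag_mult_right[OF Dexp_carrier] scalar_prod_def lessThan_atLeast0 mult.assoc)

lemma LDexp: "Dexp * mat_diag 12 (wt a b c) * transpose_mat Dexp = Lexp a b c"
proof (rule eq_matI)
  fix i j assume "i < dim_row (Lexp a b c)" "j < dim_col (Lexp a b c)"
  hence ij: "i < 8" "j < 8" by (simp_all add: Lexp_def)
  show "(Dexp * mat_diag 12 (wt a b c) * transpose_mat Dexp) $$ (i,j) = Lexp a b c $$ (i,j)"
    unfolding Lgen[OF ij] sum12 using ij unfolding less8
    by (auto simp: Lexp_def Dexp_def mat_of_rows_list_def wt_def)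
qed (use Dexp_carrier in \<open>auto simp: Lexp_def\<close>)

lemma pow_mat_add: assumes S: "(S :: 'a :: semiring_1 mat) \<in> carrier_mat n n"
  shows "S ^\<^sub>m (a + b) = S ^\<^sub>m a * S ^\<^sub>m b"
proof (induct b)
  case 0 thus ?case using S by simp
next
  case (Suc b)
  have "S ^\<^sub>m (a + Suc b) = S ^\<^sub>m (a + b) * S" by simp
  also have "\<dots> = S ^\<^sub>m a * S ^\<^sub>m b * S" using Suc by simp
  also have "\<dots> = S ^\<^sub>m a * (S ^\<^sub>m b * S)"
    by (rule assoc_mult_mat[of _ n n _ n _ n], insert S, auto)
  finally show ?case by simp
qed

lemma pow_mat_comm: assumes S: "(S :: 'a :: semiring_1 mat) \<in> carrier_mat n n"
  shows "S * S ^\<^sub>m k = S ^\<^sub>m k * S"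
  using pow_mat_add[OF S, of 1 k] pow_mat_add[OF S, of k 1] S by (simp add: add.commute)

lemma sym_pow: assumes S: "(S :: real mat) \<in> carrier_mat n n" and sym: "transpose_mat S = S"
  shows "transpose_mat (S ^\<^sub>m k) = S ^\<^sub>m k"
proof (induct k)
  case 0 thus ?case using S by simp
next
  case (Suc k)
  have "transpose_mat (S ^\<^sub>m Suc k) = transpose_mat (S ^\<^sub>m k * S)" by simp
  also have "\<dots> = transpose_mat S * transpose_mat (S ^\<^sub>m k)"
    by (rule transpose_mult[of _ n n _ n], insert S, auto)
  also have "\<dots> = S * S ^\<^sub>m k" using Suc sym by simp
  also have "\<dots> = S ^\<^sub>m Suc k" using pow_mat_comm[OF S] by simp
  finally show ?case .
qed

lemma sym_sq_zero: assumes S: "(S :: real mat) \<in> carrier_mat n n" and sym: "transpose_mat S = S"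
  and sq: "S * S = 0\<^sub>m n n"
  shows "S = 0\<^sub>m n n"
proof (rule eq_matI)
  fix i j assume "i < dim_row (0\<^sub>m n n :: real mat)" "j < dim_col (0\<^sub>m n n :: real mat)"
  hence i: "i < n" and j: "j < n" by auto
  have "(S * S) $$ (i,i) = (\<Sum>k\<in>{0..<n}. S $$ (i,k) * S $$ (k,i))"
    using S i by (simp add: scalar_prod_def)
  also have "\<dots> = (\<Sum>k\<in>{0..<n}. (S $$ (i,k))^2)"
  proof (rule sum.cong[OF refl])
    fix k assume "k \<in> {0..<n}"
    hence "S $$ (k,i) = transpose_mat S $$ (i,k)" using S i by simp
    also have "\<dots> = S $$ (i,k)" using sym by simp
    finally show "S $$ (i,k) * S $$ (k,i) = (S $$ (i,k))^2" by (simp add: power2_eq_square)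
  qed
  finally have "(\<Sum>k\<in>{0..<n}. (S $$ (i,k))^2) = 0" using sq i by simp
  hence "\<forall>k\<in>{0..<n}. (S $$ (i,k))^2 = 0"
    by (subst (asm) sum_nonneg_eq_0_iff) auto
  thus "S $$ (i,j) = 0\<^sub>m n n $$ (i,j)" using i j by simp
qed (use S in auto)

lemma sym_nilpotent: assumes S: "(S :: real mat) \<in> carrier_mat n n" and sym: "transpose_mat S = S"
  shows "S ^\<^sub>m (Suc k) = 0\<^sub>m n n \<Longrightarrow> S = 0\<^sub>m n n"
proof (induct k)
  case 0 thus ?case using S by simp
next
  case (Suc k)
  let ?T = "S ^\<^sub>m Suc k"
  have "?T * ?T = S ^\<^sub>m (Suc (Suc k) + k)" using pow_mat_add[OF S, of "Suc k" "Suc k"] by simp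
  also have "\<dots> = S ^\<^sub>m (Suc (Suc k)) * S ^\<^sub>m k" by (rule pow_mat_add[OF S])
  also have "\<dots> = 0\<^sub>m n n" using Suc(2) S by simp
  finally have "?T = 0\<^sub>m n n"
    by (rule sym_sq_zero[OF pow_carrier_mat[OF S] sym_pow[OF S sym]])
  thus ?case by (rule Suc(1))
qed

lemma sr_pos: assumes R: "(R :: real mat) \<in> carrier_mat n n" and n: "n > 0"
  and sym: "transpose_mat R = R" and nz: "R \<noteq> 0\<^sub>m n n"
  shows "spectral_radius (map_mat complex_of_real R) > 0"
proof (rule ccontr)
  let ?A = "map_mat complex_of_real R"
  have A: "?A \<in> carrier_mat n n" using R by simp
  assume "\<not> ?thesis"
  hence sr0: "spectral_radius ?A \<le> 0" by simp
  from char_poly_factorized[OF A] obtain as where "char_poly ?A = (\<Prod>a\<leftarrow>as. [:- a, 1:])" by auto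
  from jordan_nf_exists[OF A this] obtain n_as where jnf: "jordan_nf ?A n_as" by auto
  from jordan_nf_powE[OF A jnf] obtain P Q where PQ: "P \<in> carrier_mat n n" "Q \<in> carrier_mat n n"
    and pw: "\<And>k. ?A ^\<^sub>m k = P * jordan_matrix n_as ^\<^sub>m k * Q" by metis
  let ?J = "jordan_matrix n_as"
  from jnf have "similar_mat ?A ?J" unfolding jordan_nf_def by auto
  from similar_matD[OF this] obtain n' where "?A \<in> carrier_mat n' n'" "?J \<in> carrier_mat n' n'" by auto
  with A have J: "?J \<in> carrier_mat n n" by auto
  hence sumn: "sum_list (map fst n_as) = n" by (metis carrier_matD(1) jordan_matrix_dim(1))
  have a0: "a = 0" and nale: "na \<le> n" if mem: "(na, a) \<in> set n_as" for na a
  proof -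
    have na0: "na \<noteq> 0" using jnf mem unfolding jordan_nf_def by force
    have "na \<le> order a (char_poly ?A)" by (rule jordan_nf_block_size_order_bound[OF jnf mem])
    with na0 have "order a (char_poly ?A) \<noteq> 0" by auto
    hence "poly (char_poly ?A) a = 0" using order_root by metis
    hence "eigenvalue ?A a" using eigenvalue_root_char_poly[OF A] by simp
    hence "norm a \<in> norm ` spectrum ?A" unfolding spectrum_def by auto
    from spectral_radius_mem_max(2)[OF A n this] sr0 have "norm a \<le> 0" by linarith
    thus "a = 0" by simp
    show "na \<le> n" using mem sumn member_le_sum_list[of na "map fst n_as"] by force
  qed
  have Jz: "?J ^\<^sub>m n = 0\<^sub>m n n"
  proof (rule eq_matI)
    have el: "elements_mat (?J ^\<^sub>m n) \<subseteq> {0}"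
    proof -
      have "elements_mat (?J ^\<^sub>m n) \<subseteq> {0} \<union> \<Union> (set (map elements_mat (map (\<lambda> (na,a). (jordan_block na a) ^\<^sub>m n) n_as)))"
        unfolding jordan_matrix_pow by (rule elements_diag_block_mat)
      also have "\<dots> \<subseteq> {0}"
      proof -
        { fix na a x assume mem: "(na,a) \<in> set n_as" and x: "x \<in> elements_mat (jordan_block na a ^\<^sub>m n)"
          have "jordan_block na a ^\<^sub>m n = mat na na (\<lambda> (i,j). if j \<ge> i \<and> j - i = n then 1 else 0)"
            using a0[OF mem] jordan_block_zero_pow by simp
          with x nale[OF mem] have "x = 0" by (force simp: elements_mat_def) }
        thus ?thesis by force
      qed
      finally show ?thesis .
    qed
    fix i j assume "i < dim_row (0\<^sub>m n n :: complex mat)" "j < dim_col (0\<^sub>m n n :: complex mat)"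
    hence ij: "i < n" "j < n" by auto
    have "(?J ^\<^sub>m n) $$ (i,j) \<in> elements_mat (?J ^\<^sub>m n)" by (rule elements_matI[OF pow_carrier_mat[OF J] ij(1) ij(2) refl])
    with el ij show "(?J ^\<^sub>m n) $$ (i,j) = 0\<^sub>m n n $$ (i,j)" by auto
  qed (use J n in auto)
  have "?A ^\<^sub>m n = 0\<^sub>m n n" using pw[of n] Jz PQ by simp
  hence "map_mat complex_of_real (R ^\<^sub>m n) = 0\<^sub>m n n"
    using of_real_hom.mat_hom_pow[OF R, of n] by metis
  hence Rn: "R ^\<^sub>m n = 0\<^sub>m n n"
  proof (intro eq_matI)
    fix i j assume "i < dim_row (0\<^sub>m n n :: real mat)" "j < dim_col (0\<^sub>m n n :: real mat)"
    hence ij: "i < n" "j < n" by auto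
    assume h: "map_mat complex_of_real (R ^\<^sub>m n) = 0\<^sub>m n n"
    have "map_mat complex_of_real (R ^\<^sub>m n) $$ (i,j) = 0\<^sub>m n n $$ (i,j)" by (simp only: h)
    thus "(R ^\<^sub>m n) $$ (i,j) = 0\<^sub>m n n $$ (i,j)" using ij R by simp
  qed (use R in auto)
  then have "R ^\<^sub>m Suc (n - 1) = 0\<^sub>m n n" using n by simp
  from sym_nilpotent[OF R sym this] nz show False by simp
qed

lemma sr_le: assumes A: "(A :: complex mat) \<in> carrier_mat n n" and n: "n > 0"
  and rows: "\<And>i. i < n \<Longrightarrow> (\<Sum>j<n. norm (A $$ (i,j))) \<le> S"
  shows "spectral_radius A \<le> S"
proof -
  from spectral_radius_mem_max(1)[OF A n] obtain l where l: "l \<in> spectrum A"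
    and sr: "spectral_radius A = norm l" by auto
  from l obtain v where ev: "eigenvector A v l" unfolding spectrum_def eigenvalue_def by auto
  hence v: "v \<in> carrier_vec n" "v \<noteq> 0\<^sub>v n" "A *\<^sub>v v = l \<cdot>\<^sub>v v"
    unfolding eigenvector_def using A by auto
  let ?f = "\<lambda>j. norm (v $ j)"
  have fin: "finite (?f ` {..<n})" "?f ` {..<n} \<noteq> {}" using n by auto
  obtain i where i: "i < n" and imax: "\<And>j. j < n \<Longrightarrow> ?f j \<le> ?f i"
  proof -
    from Max_in[OF fin] obtain i where "i < n" "Max (?f ` {..<n}) = ?f i" by auto
    moreover have "\<And>j. j < n \<Longrightarrow> ?f j \<le> Max (?f ` {..<n})" using fin by auto
    ultimately show ?thesis using that by auto
  qed
  have pos: "?f i > 0"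
  proof (rule ccontr)
    assume "\<not> ?f i > 0"
    hence "\<And>j. j < n \<Longrightarrow> v $ j = 0" using imax by (metis norm_le_zero_iff order.trans not_less)
    hence "v = 0\<^sub>v n" using v(1) by (intro eq_vecI) auto
    with v(2) show False by simp
  qed
  have "l * v $ i = (A *\<^sub>v v) $ i" using v i by simp
  also have "\<dots> = (\<Sum>j<n. A $$ (i,j) * v $ j)"
    using A v(1) i by (simp add: scalar_prod_def lessThan_atLeast0)
  finally have eq: "l * v $ i = (\<Sum>j<n. A $$ (i,j) * v $ j)" .
  have "norm l * ?f i = norm (\<Sum>j<n. A $$ (i,j) * v $ j)" unfolding eq[symmetric] by (simp add: norm_mult)
  also have "\<dots> \<le> (\<Sum>j<n. norm (A $$ (i,j)) * ?f j)" by (rule order.trans[OF norm_sum]) (simp add: norm_mult)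
  also have "\<dots> \<le> (\<Sum>j<n. norm (A $$ (i,j)) * ?f i)"
    by (rule sum_mono) (simp add: imax mult_left_mono)
  also have "\<dots> = (\<Sum>j<n. norm (A $$ (i,j))) * ?f i" by (simp add: sum_distrib_right)
  also have "\<dots> \<le> S * ?f i" using rows[OF i] pos by (simp add: mult_right_mono)
  finally have "norm l * ?f i \<le> S * ?f i" .
  with pos have "norm l \<le> S" by simp
  thus ?thesis using sr by simp
qed

abbreviation "wx dx dy dz \<equiv> dy*dz/(4*dx)"
abbreviation "wy dx dy dz \<equiv> dx*dz/(4*dy)"
abbreviation "wz dx dy dz \<equiv> dx*dy/(4*dz)"

lemma W_eq: "DS2 dx dy dz * Dl1_inv dx dy dz = mat_diag 12 (wt (wx dx dy dz) (wy dx dy dz) (wz dx dy dz))"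
  unfolding DS2_eq Dl1_inv_eq mat_diag_diag
  by (rule arg_cong[where f = "mat_diag 12"]) (auto simp: wS_def wL_def wt_def)

lemma Lfull: "Dmat * DS2 dx dy dz * Dl1_inv dx dy dz * transpose_mat Dmat
   = Lexp (wx dx dy dz) (wy dx dy dz) (wz dx dy dz)"
proof -
  have "Dexp * DS2 dx dy dz * Dl1_inv dx dy dz = Dexp * (DS2 dx dy dz * Dl1_inv dx dy dz)"
    unfolding DS2_eq Dl1_inv_eq
    by (rule assoc_mult_mat[of _ 8 12 _ 12 _ 12]) (auto simp: Dexp_carrier)
  also have "\<dots> = Dexp * mat_diag 12 (wt (wx dx dy dz) (wy dx dy dz) (wz dx dy dz))" unfolding W_eq ..
  finally have 1: "Dexp * DS2 dx dy dz * Dl1_inv dx dy dz = \<dots>" .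
  show ?thesis unfolding Dmat_eq 1 LDexp ..
qed

lemma scal_sandwich: assumes H: "(H :: real mat) \<in> carrier_mat n n"
  shows "(c \<cdot>\<^sub>m 1\<^sub>m n) * H * (c \<cdot>\<^sub>m 1\<^sub>m n) = (c*c) \<cdot>\<^sub>m H"
proof -
  have "(c \<cdot>\<^sub>m 1\<^sub>m n) * H = c \<cdot>\<^sub>m H"
    using mult_smult_assoc_mat[of "1\<^sub>m n" n n H n c] H by simp
  moreover have "(c \<cdot>\<^sub>m H) * (c \<cdot>\<^sub>m 1\<^sub>m n) = c \<cdot>\<^sub>m (c \<cdot>\<^sub>m H)"
    using mult_smult_distrib[of "c \<cdot>\<^sub>m H" n n "1\<^sub>m n" n c] H by simp
  moreover have "c \<cdot>\<^sub>m (c \<cdot>\<^sub>m H) = (c*c) \<cdot>\<^sub>m H" by (rule eq_matI) auto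
  ultimately show ?thesis by simp
qed

definition Rf :: "real \<Rightarrow> real \<Rightarrow> real \<Rightarrow> real \<Rightarrow> real \<Rightarrow> (nat \<Rightarrow> nat \<Rightarrow> nat \<Rightarrow> real) \<Rightarrow> real mat" where
  "Rf hbar m dx dy dz u = mat 8 8 (\<lambda>(p,q). (4*hbar/(m*(dx*dy*dz))) * Lexp (wx dx dy dz) (wy dx dy dz) (wz dx dy dz) $$ (p,q)
     + (if p = q then u (p mod 2) ((p div 2) mod 2) (p div 4) / hbar else 0))"

lemma Lexp_carrier: "Lexp a b c \<in> carrier_mat 8 8" by (simp add: Lexp_def)

lemma cell_eq: assumes h: "hbar > 0" and m: "m > 0" and dx: "dx > 0" and dy: "dy > 0" and dz: "dz > 0"
  shows "(1 / hbar) \<cdot>\<^sub>m (DV2_inv_sqrt dx dy dz * Hcell hbar m dx dy dz u * DV2_inv_sqrt dx dy dz)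
     = Rf hbar m dx dy dz u"
proof -
  let ?V = "dx*dy*dz"
  let ?c = "1 / sqrt (?V / 8)"
  let ?L = "Lexp (wx dx dy dz) (wy dx dy dz) (wz dx dy dz)"
  have V: "?V > 0" using dx dy dz by simp
  have cc: "?c * ?c = 8 / ?V" using V by (simp add: real_sqrt_mult[symmetric])
  have DVU: "DV2 dx dy dz * DU u = (?V/8) \<cdot>\<^sub>m DU u"
    unfolding DV2_def using mult_smult_assoc_mat[of "1\<^sub>m 8" 8 8 "DU u" 8 "?V/8"]
    by (simp add: DU_def left_mult_one_mat[OF mat_diag_dim])
  have H: "Hcell hbar m dx dy dz u = (hbar^2 / (2 * m)) \<cdot>\<^sub>m ?L + (?V/8) \<cdot>\<^sub>m DU u"
    unfolding Hcell_def Lfull DVU ..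
  have Hc: "Hcell hbar m dx dy dz u \<in> carrier_mat 8 8" unfolding H by (simp add: Lexp_carrier DU_def)
  have "DV2_inv_sqrt dx dy dz * Hcell hbar m dx dy dz u * DV2_inv_sqrt dx dy dz
      = (?c * ?c) \<cdot>\<^sub>m Hcell hbar m dx dy dz u"
    unfolding DV2_inv_sqrt_def by (rule scal_sandwich[OF Hc])
  also have "\<dots> = (8 / ?V) \<cdot>\<^sub>m Hcell hbar m dx dy dz u" unfolding cc ..
  finally have e: "DV2_inv_sqrt dx dy dz * Hcell hbar m dx dy dz u * DV2_inv_sqrt dx dy dz = \<dots>" .
  show ?thesis
  proof (rule eq_matI)
    fix i j assume "i < dim_row (Rf hbar m dx dy dz u)" "j < dim_col (Rf hbar m dx dy dz u)"
    hence ij: "i < 8" "j < 8" by (simp_all add: Rf_def)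
    have gen: "(1/hbar) * ((8/?V) * ((hbar^2/(2*m)) * x + (?V/8) * d)) = (4*hbar/(m*?V)) * x + d / hbar" for x d
      using h m dx dy dz by (simp add: field_simps power2_eq_square)
    show "((1 / hbar) \<cdot>\<^sub>m (DV2_inv_sqrt dx dy dz * Hcell hbar m dx dy dz u * DV2_inv_sqrt dx dy dz)) $$ (i,j)
        = Rf hbar m dx dy dz u $$ (i,j)"
      unfolding e using ij Lexp_carrier[of "wx dx dy dz" "wy dx dy dz" "wz dx dy dz"]
      apply (simp add: H Rf_def DU_def mat_diag_def del: Lexp_def)
      using h m dx dy dz by (auto simp: field_simps power2_eq_square)
  qed (use Hc in \<open>auto simp: e Rf_def\<close>)
qed

lemma sum8: "(\<Sum>q<(8::nat). f q) = f 0 + f 1 + f 2 + f 3 + f 4 + f 5 + f 6 + f 7"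
  by (simp add: eval_nat_numeral)

lemma Lrow: assumes "a \<ge> 0" "b \<ge> 0" "c \<ge> 0" "p < 8"
  shows "(\<Sum>q<8. \<bar>Lexp a b c $$ (p,q)\<bar>) = 2*(a+b+c)"
  using assms unfolding sum8 less8 by (auto simp: Lexp_def)

lemma Lexp_sym: assumes "p < 8" "q < 8" shows "Lexp a b c $$ (q,p) = Lexp a b c $$ (p,q)"
  using assms unfolding less8 by (auto simp: Lexp_def)

lemma Rf_carrier: "Rf hbar m dx dy dz u \<in> carrier_mat 8 8" by (simp add: Rf_def)

lemma Rf_sym: "transpose_mat (Rf hbar m dx dy dz u) = Rf hbar m dx dy dz u"
proof (rule eq_matI)
  fix i j assume "i < dim_row (Rf hbar m dx dy dz u)" "j < dim_col (Rf hbar m dx dy dz u)"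
  hence ij: "i < 8" "j < 8" by (simp_all add: Rf_def)
  show "transpose_mat (Rf hbar m dx dy dz u) $$ (i,j) = Rf hbar m dx dy dz u $$ (i,j)"
    using ij Lexp_sym[OF ij] by (auto simp: Rf_def simp del: Lexp_def)
qed (auto simp: Rf_def)

lemma Rf_nz: assumes h: "hbar > 0" and m: "m > 0" and dx: "dx > 0" and dy: "dy > 0" and dz: "dz > 0"
  shows "Rf hbar m dx dy dz u \<noteq> 0\<^sub>m 8 8"
proof
  assume "Rf hbar m dx dy dz u = 0\<^sub>m 8 8"
  hence "Rf hbar m dx dy dz u $$ (0,1) = 0" by simp
  moreover have "Rf hbar m dx dy dz u $$ (0,1) = - (hbar/(m*dx^2))"
    using h m dx dy dz by (simp add: Rf_def Lexp_def field_simps power2_eq_square)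
  ultimately show False using h m dx by simp
qed

lemma abs_aux: "(k::real) \<ge> 0 \<Longrightarrow> \<bar>k*x + (if c then y else 0)\<bar> \<le> k*\<bar>x\<bar> + (if c then \<bar>y\<bar> else 0)"
  by (cases c) (auto simp: abs_mult intro: order.trans[OF abs_triangle_ineq])

lemma Rf_row: assumes h: "hbar > 0" and m: "m > 0" and dx: "dx > 0" and dy: "dy > 0" and dz: "dz > 0"
  and p: "p < 8"
  shows "(\<Sum>q<8. \<bar>Rf hbar m dx dy dz u $$ (p,q)\<bar>)
     \<le> (2 * hbar / m) * (1 / dx^2 + 1 / dy^2 + 1 / dz^2) + \<bar>u (p mod 2) ((p div 2) mod 2) (p div 4)\<bar> / hbar"
proof -
  let ?k = "4*hbar/(m*(dx*dy*dz))"
  let ?L = "Lexp (dy*dz/(4*dx)) (dx*dz/(4*dy)) (dx*dy/(4*dz))"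
  let ?d = "u (p mod 2) ((p div 2) mod 2) (p div 4) / hbar"
  have k: "?k \<ge> 0" using h m dx dy dz by simp
  have "(\<Sum>q<8. \<bar>Rf hbar m dx dy dz u $$ (p,q)\<bar>) = (\<Sum>q<8. \<bar>?k * ?L $$ (p,q) + (if p = q then ?d else 0)\<bar>)"
    using p by (intro sum.cong) (auto simp: Rf_def simp del: Lexp_def)
  also have "\<dots> \<le> (\<Sum>q<8. ?k * \<bar>?L $$ (p,q)\<bar> + (if p = q then \<bar>?d\<bar> else 0))"
    by (rule sum_mono, rule abs_aux[OF k])
  also have "\<dots> = ?k * (\<Sum>q<8. \<bar>?L $$ (p,q)\<bar>) + \<bar>?d\<bar>"
    using p by (simp add: sum.distrib sum_distrib_left)
  also have "\<dots> = ?k * (2 * (dy*dz/(4*dx) + dx*dz/(4*dy) + dx*dy/(4*dz))) + \<bar>?d\<bar>"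
    using dx dy dz p by (subst Lrow) auto
  also have "\<dots> = (2 * hbar / m) * (1 / dx^2 + 1 / dy^2 + 1 / dz^2) + \<bar>u (p mod 2) ((p div 2) mod 2) (p div 4)\<bar> / hbar"
    using h m dx dy dz by (simp add: field_simps power2_eq_square)
  finally show ?thesis .
qed

lemma cell_bound: assumes h: "hbar > 0" and m: "m > 0" and dx: "dx > 0" and dy: "dy > 0" and dz: "dz > 0"
  and u: "\<And>a b c. a \<le> 1 \<Longrightarrow> b \<le> 1 \<Longrightarrow> c \<le> 1 \<Longrightarrow> \<bar>u a b c\<bar> \<le> Mx"
  shows "2 / ((2 * hbar / m) * (1 / dx^2 + 1 / dy^2 + 1 / dz^2) + Mx / hbar) \<le> cfl_gen_cell hbar m dx dy dz u"
proof -
  let ?S = "(2 * hbar / m) * (1 / dx^2 + 1 / dy^2 + 1 / dz^2) + Mx / hbar"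
  let ?R = "Rf hbar m dx dy dz u"
  let ?A = "map_mat complex_of_real ?R"
  have A: "?A \<in> carrier_mat 8 8" using Rf_carrier by simp
  have "spectral_radius ?A \<le> ?S"
  proof (rule sr_le[OF A])
    fix i :: nat assume i: "i < 8"
    have "(\<Sum>j<8. norm (?A $$ (i,j))) = (\<Sum>j<8. \<bar>?R $$ (i,j)\<bar>)"
      using i by (intro sum.cong) (auto simp: Rf_carrier[THEN carrier_matD(1)] Rf_carrier[THEN carrier_matD(2)])
    also have "\<dots> \<le> (2 * hbar / m) * (1 / dx^2 + 1 / dy^2 + 1 / dz^2) + \<bar>u (i mod 2) ((i div 2) mod 2) (i div 4)\<bar> / hbar"
      by (rule Rf_row[OF h m dx dy dz i])
    also have "\<bar>u (i mod 2) ((i div 2) mod 2) (i div 4)\<bar> \<le> Mx"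
      using i by (intro u) auto
    hence "\<bar>u (i mod 2) ((i div 2) mod 2) (i div 4)\<bar> / hbar \<le> Mx / hbar"
      using h by (simp add: divide_right_mono)
    finally show "(\<Sum>j<8. norm (?A $$ (i,j))) \<le> ?S" by simp
  qed simp
  moreover have "spectral_radius ?A > 0"
    by (rule sr_pos[OF Rf_carrier _ Rf_sym Rf_nz[OF h m dx dy dz]]) simp
  ultimately have "2 / ?S \<le> 2 / spectral_radius ?A"
    by (intro divide_left_mono) auto
  thus ?thesis unfolding cfl_gen_cell_def cell_eq[OF h m dx dy dz] .
qed

theorem corollary1:
  fixes hbar m dx dy dz :: real and nx ny nz :: nat
    and U :: "nat \<Rightarrow> nat \<Rightarrow> nat \<Rightarrow> real"
  assumes "hbar > 0" and "m > 0" and "dx > 0" and "dy > 0" and "dz > 0"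
    and "nx \<ge> 1" and "ny \<ge> 1" and "nz \<ge> 1"
  shows "cfl_region hbar m dx dy dz nx ny nz U \<le>
    Min {cfl_gen_cell hbar m dx dy dz (\<lambda>a b c. U (i + a) (j + b) (k + c)) | i j k.
           i \<in> {1..nx} \<and> j \<in> {1..ny} \<and> k \<in> {1..nz}}"
proof -
  note h = assms(1) and mm = assms(2) and dx = assms(3) and dy = assms(4) and dz = assms(5)
  let ?G = "{\<bar>U i j k\<bar> | i j k. i \<in> {1..nx+1} \<and> j \<in> {1..ny+1} \<and> k \<in> {1..nz+1}}"
  let ?Mx = "Max ?G"
  have Gsub: "?G \<subseteq> (\<lambda>(i,j,k). \<bar>U i j k\<bar>) ` ({1..nx+1} \<times> {1..ny+1} \<times> {1..nz+1})" by force
  have Gfin: "finite ?G" by (rule finite_subset[OF Gsub]) auto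
  let ?C = "{cfl_gen_cell hbar m dx dy dz (\<lambda>a b c. U (i + a) (j + b) (k + c)) | i j k.
           i \<in> {1..nx} \<and> j \<in> {1..ny} \<and> k \<in> {1..nz}}"
  have Csub: "?C \<subseteq> (\<lambda>(i,j,k). cfl_gen_cell hbar m dx dy dz (\<lambda>a b c. U (i + a) (j + b) (k + c)))
       ` ({1..nx} \<times> {1..ny} \<times> {1..nz})" by force
  have Cfin: "finite ?C" by (rule finite_subset[OF Csub]) auto
  have Cne: "?C \<noteq> {}" using assms(6-8) by auto
  have reg: "cfl_region hbar m dx dy dz nx ny nz U = 2 / ((2 * hbar / m) * (1 / dx^2 + 1 / dy^2 + 1 / dz^2) + ?Mx / hbar)"
    unfolding cfl_region_def by simp
  show ?thesis
    unfolding reg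
  proof (subst Min_ge_iff[OF Cfin Cne], intro ballI)
    fix x assume "x \<in> ?C"
    then obtain i j k where ijk: "i \<in> {1..nx}" "j \<in> {1..ny}" "k \<in> {1..nz}"
      and x: "x = cfl_gen_cell hbar m dx dy dz (\<lambda>a b c. U (i + a) (j + b) (k + c))" by blast
    show "2 / ((2 * hbar / m) * (1 / dx^2 + 1 / dy^2 + 1 / dz^2) + ?Mx / hbar) \<le> x"
      unfolding x
    proof (rule cell_bound[OF h mm dx dy dz])
      fix a b c :: nat assume "a \<le> 1" "b \<le> 1" "c \<le> 1"
      hence "\<bar>U (i + a) (j + b) (k + c)\<bar> \<in> ?G" using ijk by force
      thus "\<bar>U (i + a) (j + b) (k + c)\<bar> \<le> ?Mx" using Gfin by (rule Max_ge[rotated])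
    qed
  qed
qed

end
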